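(* Let $\mathcal{C}=\{K_1,\dots,K_m\}$ be a covering of a finite set $E$. Let $A=\{A_1,\dots,A_s\}$ be the collection of all nonempty sets of the form $K_i-\bigcup_{j\neq i}K_j$ ($1\le i\le m$), and let $B=E-\bigcup_{i=1}^sA_i$. Then $\{A_1,\dots,A_s\}\cup\{\{x\}:x\in B\}$ is exactly the set of atoms of the lattice $\mathcal{L}(M(\mathcal{C}))$.
   Context: A covering of a finite set $E$ is a family of nonempty subsets of $E$ whose union is $E$. For a family $\mathcal{C}=\{K_1,\dots,K_m\}$ of subsets of $E$, a partial transversal is a set $\{e_1,\dots,e_k\}$ of distinct elements such that $e_j\in K_{i_j}$ for some distinct indices $i_1,\dots,i_k$; the transversal matroid $M(\mathcal{C})$ is the matroid on $E$ whose independent sets are the partial transversals of $\mathcal{C}$. For a matroid $M$ with rank function $r_M$, $cl_M(X)=\{a\in E:r_M(X\cup\{a\})=r_M(X)\}$; $X$ is closed if $cl_M(X)=X$. $\mathcal{L}(M)$ denotes the lattice of all closed sets of $M$ ordered by inclusion (meet is intersection, join is $cl_M$ of the union); its least element is $cl_M(\emptyset)$. An atom of a lattice with least element $0$ is an element covering $0$. *)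

theory Defs
  imports Main
begin

text \<open>A family K_1..K_m is represented as K :: nat => 'a set with indices i < m.\<close>

definition is_covering :: "'a set \<Rightarrow> (nat \<Rightarrow> 'a set) \<Rightarrow> nat \<Rightarrow> bool" where
  "is_covering E K m \<longleftrightarrow> (\<forall>i<m. K i \<noteq> {} \<and> K i \<subseteq> E) \<and> (\<Union>i<m. K i) = E"

definition partial_transversal :: "(nat \<Rightarrow> 'a set) \<Rightarrow> nat \<Rightarrow> 'a set \<Rightarrow> bool" where
  "partial_transversal K m X \<longleftrightarrow> finite X \<and>
     (\<exists>f. inj_on f X \<and> (\<forall>x\<in>X. f x < m \<and> x \<in> K (f x)))"

definition mrank :: "('a set \<Rightarrow> bool) \<Rightarrow> 'a set \<Rightarrow> nat" where
  "mrank indep X = Max {card I | I. I \<subseteq> X \<and> indep I}"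

definition mcl :: "'a set \<Rightarrow> ('a set \<Rightarrow> bool) \<Rightarrow> 'a set \<Rightarrow> 'a set" where
  "mcl E indep X = {a \<in> E. mrank indep (insert a X) = mrank indep X}"

definition closed_sets :: "'a set \<Rightarrow> ('a set \<Rightarrow> bool) \<Rightarrow> 'a set set" where
  "closed_sets E indep = {X. X \<subseteq> E \<and> mcl E indep X = X}"

definition lattice_atoms :: "'a set \<Rightarrow> ('a set \<Rightarrow> bool) \<Rightarrow> 'a set set" where
  "lattice_atoms E indep = {F \<in> closed_sets E indep. mcl E indep {} \<subset> F \<and>
      \<not> (\<exists>G \<in> closed_sets E indep. mcl E indep {} \<subset> G \<and> G \<subset> F)}"

end

theory Submission
  imports Defs
begin

context
  fixes E :: "'a set" and K :: "nat \<Rightarrow> 'a set" and m :: nat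
  assumes cov: "is_covering E K m"
begin

definition "NN a = {i. i < m \<and> a \<in> K i}"
definition "SS a = {b \<in> E. b = a \<or> (\<exists>i. NN a = {i} \<and> NN b = {i})}"

abbreviation "ind \<equiv> partial_transversal K m"

lemma KE: "i < m \<Longrightarrow> K i \<subseteq> E" using cov unfolding is_covering_def by auto

lemma NN_ne: "a \<in> E \<Longrightarrow> \<exists>i. i \<in> NN a"
  using cov unfolding is_covering_def NN_def by auto

lemma ind_card: "ind I \<Longrightarrow> card I \<le> m"
proof -
  assume "ind I"
  then obtain f where "inj_on f I" "\<forall>x\<in>I. f x < m \<and> x \<in> K (f x)"
    unfolding partial_transversal_def by auto
  then have "card I \<le> card {..<m}"
    by (intro card_inj_on_le[of f I]) auto
  then show ?thesis by simp
qed

lemma ind_empty: "ind {}"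
  unfolding partial_transversal_def by auto

lemma rank_fin: "finite {card I | I. I \<subseteq> X \<and> ind I}"
  by (rule finite_subset[of _ "{..m}"]) (auto dest: ind_card)

lemma rank_ge: "I \<subseteq> X \<Longrightarrow> ind I \<Longrightarrow> card I \<le> mrank ind X"
  unfolding mrank_def by (rule Max_ge[OF rank_fin]) blast

lemma rank_ex: "\<exists>I. I \<subseteq> X \<and> ind I \<and> card I = mrank ind X"
proof -
  have "{card I | I. I \<subseteq> X \<and> ind I} \<noteq> {}" using ind_empty by blast
  from Max_in[OF rank_fin this] show ?thesis unfolding mrank_def by auto
qed

lemma rank_mono: "X \<subseteq> Y \<Longrightarrow> mrank ind X \<le> mrank ind Y"
proof -
  assume XY: "X \<subseteq> Y"
  obtain I where "I \<subseteq> X" "ind I" "card I = mrank ind X" using rank_ex[of X] by blast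
  then show ?thesis using rank_ge[of I Y] XY by auto
qed

lemma rank_empty: "mrank ind {} = 0"
  using rank_ex[of "{}"] by auto

lemma single_ind: "a \<in> E \<Longrightarrow> ind {a}"
proof -
  assume "a \<in> E"
  then obtain i where "i \<in> NN a" using NN_ne by blast
  then show ?thesis unfolding partial_transversal_def NN_def
    by (intro conjI exI[of _ "\<lambda>_. i"]) auto
qed

lemma cl_empty: "mcl E ind {} = {}"
proof -
  { fix a assume "a \<in> E"
    then have "1 \<le> mrank ind {a}" using rank_ge[of "{a}" "{a}"] single_ind by auto
    then have "mrank ind {a} \<noteq> mrank ind {}" using rank_empty by simp }
  then show ?thesis unfolding mcl_def by auto
qed

lemma f_in_NN: "\<forall>x\<in>I. f x < m \<and> x \<in> K (f x) \<Longrightarrow> x \<in> I \<Longrightarrow> f x \<in> NN x"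
  unfolding NN_def by auto

lemma SS_E: "SS a \<subseteq> E" unfolding SS_def by auto
lemma SS_self: "a \<in> E \<Longrightarrow> a \<in> SS a" unfolding SS_def by auto

lemma rank_SS_le: "a \<in> E \<Longrightarrow> mrank ind (SS a) \<le> 1"
proof -
  assume aE: "a \<in> E"
  obtain I where I: "I \<subseteq> SS a" "ind I" "card I = mrank ind (SS a)" using rank_ex by blast
  then obtain f where f: "inj_on f I" "\<forall>x\<in>I. f x < m \<and> x \<in> K (f x)"
    unfolding partial_transversal_def by auto
  show ?thesis
  proof (cases "\<exists>i. NN a = {i}")
    case True
    then obtain i where i: "NN a = {i}" by blast
    have "f ` I \<subseteq> {i}"
    proof
      fix y assume "y \<in> f ` I"
      then obtain x where x: "x \<in> I" "y = f x" by blast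
      have "NN x = {i}" using I(1) x(1) i unfolding SS_def by auto
      then show "y \<in> {i}" using f_in_NN[OF f(2) x(1)] x by auto
    qed
    then have "card I \<le> card {i}" by (intro card_inj_on_le[OF f(1)]) auto
    then show ?thesis using I by simp
  next
    case False
    then have "SS a = {a}" using aE unfolding SS_def by auto
    then have "I \<subseteq> {a}" using I by auto
    then have "card I \<le> card {a}" by (intro card_mono) auto
    then show ?thesis using I by simp
  qed
qed

lemma rank_SS_ins: "a \<in> E \<Longrightarrow> c \<in> E \<Longrightarrow> c \<notin> SS a \<Longrightarrow> 2 \<le> mrank ind (insert c (SS a))"
proof -
  assume aE: "a \<in> E" and cE: "c \<in> E" and cn: "c \<notin> SS a"
  have ca: "c \<noteq> a" using cn SS_self aE by auto
  obtain i where i: "i \<in> NN a" using NN_ne aE by blast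
  obtain j0 where j0: "j0 \<in> NN c" using NN_ne cE by blast
  have "\<exists>i j. i \<in> NN a \<and> j \<in> NN c \<and> i \<noteq> j"
  proof (cases "\<exists>j. j \<in> NN c \<and> i \<noteq> j")
    case True then show ?thesis using i by blast
  next
    case F1: False
    then have h: "\<And>j. j \<in> NN c \<Longrightarrow> j = i" by blast
    have Nc: "NN c = {i}" using h j0 by blast
    show ?thesis
    proof (cases "NN a = {i}")
      case True
      have "c \<in> SS a" unfolding SS_def using cE True Nc by blast
      then show ?thesis using cn by simp
    next
      case False
      then obtain k where k: "k \<in> NN a" "k \<noteq> i" using i by blast
      then show ?thesis using Nc by blast
    qed
  qed
  then obtain i j where i: "i \<in> NN a" and j: "j \<in> NN c" "i \<noteq> j" by blast
  have im: "i < m" "a \<in> K i" using i unfolding NN_def by auto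
  have jm: "j < m" "c \<in> K j" using j unfolding NN_def by auto
  define f where "f = (\<lambda>x. if x = a then i else j)"
  have fa: "f a = i" and fc: "f c = j" using ca unfolding f_def by auto
  have inj: "inj_on f {a, c}" unfolding inj_on_def using fa fc j(2) by auto
  have "ind {a, c}" unfolding partial_transversal_def
    using inj fa fc im jm by (intro conjI exI[of _ f]) auto
  moreover have "{a, c} \<subseteq> insert c (SS a)" using SS_self aE by auto
  ultimately have "card {a,c} \<le> mrank ind (insert c (SS a))" using rank_ge by blast
  then show ?thesis using ca by simp
qed

lemma SS_closed: "a \<in> E \<Longrightarrow> SS a \<in> closed_sets E ind"
proof -
  assume aE: "a \<in> E"
  have r1: "1 \<le> mrank ind (SS a)" using rank_ge[of "{a}" "SS a"] single_ind[OF aE] SS_self[OF aE] by auto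
  have "mcl E ind (SS a) = SS a"
  proof
    show "mcl E ind (SS a) \<subseteq> SS a"
    proof
      fix c assume c: "c \<in> mcl E ind (SS a)"
      then have cE: "c \<in> E" unfolding mcl_def by auto
      show "c \<in> SS a"
      proof (rule ccontr)
        assume "c \<notin> SS a"
        from rank_SS_ins[OF aE cE this] rank_SS_le[OF aE] c show False unfolding mcl_def by auto
      qed
    qed
    show "SS a \<subseteq> mcl E ind (SS a)" unfolding mcl_def using SS_E by (auto simp: insert_absorb)
  qed
  then show ?thesis unfolding closed_sets_def using SS_E by auto
qed

lemma closed_SS: assumes F: "F \<in> closed_sets E ind" and aF: "a \<in> F" shows "SS a \<subseteq> F"
proof
  fix b assume b: "b \<in> SS a"
  have FE: "F \<subseteq> E" and Fc: "mcl E ind F = F" using F unfolding closed_sets_def by auto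
  show "b \<in> F"
  proof (cases "b = a")
    case True then show ?thesis using aF by simp
  next
    case False
    then obtain i where i: "NN a = {i}" "NN b = {i}" and bE: "b \<in> E" using b unfolding SS_def by auto
    obtain I where I: "I \<subseteq> insert b F" "ind I" "card I = mrank ind (insert b F)" using rank_ex by blast
    then obtain f where f: "finite I" "inj_on f I" "\<forall>x\<in>I. f x < m \<and> x \<in> K (f x)"
      unfolding partial_transversal_def by auto
    have "mrank ind (insert b F) \<le> mrank ind F"
    proof (cases "b \<in> I")
      case False
      then have "I \<subseteq> F" using I by auto
      then show ?thesis using rank_ge I by metis
    next
      case True
      have fb: "f b = i" using f_in_NN[OF f(3) True] i by auto
      have aI: "a \<notin> I"
      proof
        assume "a \<in> I"
        then have "f a = i" using f_in_NN[OF f(3)] i by auto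
        then show False using f(2) fb \<open>a \<in> I\<close> True \<open>b \<noteq> a\<close> unfolding inj_on_def by metis
      qed
      define I' where "I' = insert a (I - {b})"
      define f' where "f' = f(a := i)"
      have ne: "\<forall>x\<in>I - {b}. f x \<noteq> i" using f(2) fb True unfolding inj_on_def by auto
      have im: "i < m" using i unfolding NN_def by auto
      have aK: "a \<in> K i" using i unfolding NN_def by auto
      have "ind I'" unfolding partial_transversal_def I'_def
        apply (intro conjI exI[of _ f'])
        using f ne aI im aK unfolding f'_def inj_on_def by auto
      moreover have "I' \<subseteq> F" using I aF unfolding I'_def by auto
      moreover have "card I' = card I" unfolding I'_def using f(1) aI True
        using card_Suc_Diff1[OF f(1) True] aI f(1) by simp
      ultimately show ?thesis using rank_ge I by metis
    qed
    moreover have "mrank ind F \<le> mrank ind (insert b F)" by (rule rank_mono) auto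
    ultimately have "b \<in> mcl E ind F" unfolding mcl_def using bE by auto
    then show ?thesis using Fc by simp
  qed
qed

lemma SS_alt: "a \<in> E \<Longrightarrow> NN a = {i} \<Longrightarrow> SS a = {c \<in> E. NN c = {i}}"
  unfolding SS_def by auto

lemma SS_eq: "a \<in> E \<Longrightarrow> b \<in> SS a \<Longrightarrow> SS b = SS a"
proof -
  assume aE: "a \<in> E" and b: "b \<in> SS a"
  show ?thesis
  proof (cases "b = a")
    case True then show ?thesis by simp
  next
    case False
    then obtain i where i: "NN a = {i}" "NN b = {i}" and bE: "b \<in> E" using b unfolding SS_def by auto
    show ?thesis using SS_alt[OF aE i(1)] SS_alt[OF bE i(2)] by simp
  qed
qed

lemma atoms_eq: "lattice_atoms E ind = {SS a | a. a \<in> E}"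
proof
  show "lattice_atoms E ind \<subseteq> {SS a | a. a \<in> E}"
  proof
    fix F assume F: "F \<in> lattice_atoms E ind"
    then have Fc: "F \<in> closed_sets E ind" and ne: "{} \<subset> F"
      and mn: "\<not> (\<exists>G \<in> closed_sets E ind. {} \<subset> G \<and> G \<subset> F)"
      unfolding lattice_atoms_def cl_empty by auto
    obtain a where aF: "a \<in> F" using ne by auto
    have aE: "a \<in> E" using Fc aF unfolding closed_sets_def by auto
    have "SS a \<subseteq> F" using closed_SS[OF Fc aF] .
    moreover have "{} \<subset> SS a" using SS_self[OF aE] by auto
    ultimately have "SS a = F" using mn SS_closed[OF aE] by blast
    then show "F \<in> {SS a | a. a \<in> E}" using aE by blast
  qed
  show "{SS a | a. a \<in> E} \<subseteq> lattice_atoms E ind"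
  proof
    fix F assume "F \<in> {SS a | a. a \<in> E}"
    then obtain a where aE: "a \<in> E" and Fa: "F = SS a" by blast
    have "\<not> (\<exists>G \<in> closed_sets E ind. {} \<subset> G \<and> G \<subset> SS a)"
    proof
      assume "\<exists>G \<in> closed_sets E ind. {} \<subset> G \<and> G \<subset> SS a"
      then obtain G where G: "G \<in> closed_sets E ind" "{} \<subset> G" "G \<subset> SS a" by blast
      then obtain b where bG: "b \<in> G" by auto
      then have "b \<in> SS a" using G by auto
      then have "SS b = SS a" using SS_eq aE by blast
      then show False using closed_SS[OF G(1) bG] G(3) by auto
    qed
    then show "F \<in> lattice_atoms E ind"
      unfolding lattice_atoms_def cl_empty Fa using SS_closed[OF aE] SS_self[OF aE] by auto
  qed
qed

definition "DD i = K i - (\<Union>j\<in>{..<m} - {i}. K j)"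

lemma memD: "i < m \<Longrightarrow> (x \<in> DD i \<longleftrightarrow> NN x = {i})"
  unfolding DD_def NN_def by auto

lemma SS_D: "a \<in> E \<Longrightarrow> NN a = {i} \<Longrightarrow> SS a = DD i"
proof -
  assume aE: "a \<in> E" and i: "NN a = {i}"
  have im: "i < m" using i unfolding NN_def by auto
  have "DD i \<subseteq> E" using KE[OF im] unfolding DD_def by auto
  then show ?thesis using memD[OF im] i aE unfolding SS_def by auto
qed

lemma SS_single: "a \<in> E \<Longrightarrow> \<not> (\<exists>i. NN a = {i}) \<Longrightarrow> SS a = {a}"
  unfolding SS_def by auto

lemma main:
  "{DD i | i. i < m \<and> DD i \<noteq> {}} \<union> {{x} | x. x \<in> E - \<Union>{DD i | i. i < m \<and> DD i \<noteq> {}}}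
   = {SS a | a. a \<in> E}" (is "?A \<union> ?B = ?S")
proof -
  have UA: "x \<in> \<Union>?A \<longleftrightarrow> (\<exists>i. NN x = {i})" for x
  proof
    assume "x \<in> \<Union>?A"
    then obtain D where "D \<in> ?A" "x \<in> D" by (rule UnionE)
    then obtain i where "i < m" "x \<in> DD i" by blast
    then show "\<exists>i. NN x = {i}" using memD by blast
  next
    assume "\<exists>i. NN x = {i}"
    then obtain i where i: "NN x = {i}" by blast
    then have im: "i < m" unfolding NN_def by auto
    then have xD: "x \<in> DD i" using memD i by blast
    then have "DD i \<in> ?A" using im by blast
    then show "x \<in> \<Union>?A" using xD by (rule UnionI)
  qed
  show ?thesis
  proof (intro equalityI subsetI)
    fix F assume "F \<in> ?A \<union> ?B"
    then show "F \<in> ?S"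
    proof
      assume "F \<in> ?A"
      then obtain i where i: "i < m" "F = DD i" "DD i \<noteq> {}" by blast
      then obtain a where a: "a \<in> DD i" by blast
      have "a \<in> E" using a KE[OF i(1)] unfolding DD_def by auto
      moreover have "NN a = {i}" using memD i a by blast
      ultimately have "F = SS a" using SS_D i(2) by simp
      then show ?thesis using \<open>a \<in> E\<close> by blast
    next
      assume "F \<in> ?B"
      then obtain x where x: "x \<in> E" "x \<notin> \<Union>?A" "F = {x}" by blast
      have "\<not> (\<exists>i. NN x = {i})" using x(2) unfolding UA[of x] .
      then have "SS x = {x}" using SS_single[OF x(1)] by simp
      then have "F = SS x" using x by simp
      then show ?thesis using x(1) by blast
    qed
  next
    fix F assume "F \<in> ?S"
    then obtain a where a: "a \<in> E" "F = SS a" by blast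
    show "F \<in> ?A \<union> ?B"
    proof (cases "\<exists>i. NN a = {i}")
      case True
      then obtain i where i: "NN a = {i}" by blast
      then have im: "i < m" unfolding NN_def by auto
      have "a \<in> DD i" using memD[OF im] i by blast
      then have "DD i \<in> ?A" using im by blast
      then have "F \<in> ?A" using SS_D[OF a(1) i] a(2) by simp
      then show ?thesis by (rule UnI1)
    next
      case False
      then have "F = {a}" using SS_single a by blast
      moreover have "a \<notin> \<Union>?A" unfolding UA[of a] using False .
      ultimately have "F \<in> ?B" using a(1) by blast
      then show ?thesis by (rule UnI2)
    qed
  qed
qed

end

theorem theorem2:
  fixes E :: "'a set" and K :: "nat \<Rightarrow> 'a set" and m :: nat
  assumes "finite E" and "is_covering E K m"
  defines "A \<equiv> {K i - (\<Union>j\<in>{..<m} - {i}. K j) | i. i < m \<and> K i - (\<Union>j\<in>{..<m} - {i}. K j) \<noteq> {}}"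
  defines "B \<equiv> E - \<Union>A"
  shows "A \<union> {{x} | x. x \<in> B} = lattice_atoms E (partial_transversal K m)"
proof -
  have eqA: "A = {DD K m i | i. i < m \<and> DD K m i \<noteq> {}}" unfolding A_def DD_def[OF assms(2)] by (rule refl)
  show ?thesis unfolding B_def eqA using main[OF assms(2)] atoms_eq[OF assms(2)] by (rule trans[OF _ sym])
qed

end
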